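(* Let $C$ be a totally bounded subset of a metric space $(X,d)$ with II-modulus of total boundedness $\gamma$, $T:C\to C$ nonexpansive with $\mathrm{Fix}(T)\ne\emptyset$, $x\in C$, $x_n:=T^nx$, and assume $(x_n)$ has approximate fixed points with $\Phi$ an approximate fixed point bound. Then for all $k\in\mathbb{N}$ and $g:\mathbb{N}\to\mathbb{N}$: (i) there exists $N\le\Sigma_0(\gamma(4k+3))$ with $d(x_i,x_j)\le\frac1{k+1}$ for all $i,j\in[N,N+g(N)]$, where $\Sigma_0(0)=0$, $\Sigma_0(n+1)=\Phi\big((4k+4)g^M(\Sigma_0(n))\big)$; (ii) there exists $N\le\tilde\Sigma_0(\gamma(8k+7))$ with $d(x_i,x_j)\le\frac1{k+1}$ and $d(x_i,Tx_i)\le\frac1{k+1}$ for all $i,j\in[N,N+g(N)]$, where $\tilde\Sigma_0(0)=0$, $\tilde\Sigma_0(n+1)=\Phi\big(\max\{2k+1,(8k+8)g^M(\tilde\Sigma_0(n))\}\big)$.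
   Context: II-modulus of total boundedness for $C$: $\gamma:\mathbb{N}\to\mathbb{N}$ such that for every $k$ and every sequence $(y_n)$ in $C$ there are $0\le i<j\le\gamma(k)$ with $d(y_i,y_j)\le\frac1{k+1}$. Nonexpansive: $d(Tx,Ty)\le d(x,y)$. An approximate fixed point bound for $(x_n)$ is a nondecreasing $\Phi:\mathbb{N}\to\mathbb{N}$ such that for every $k$ there is $N\le\Phi(k)$ with $d(x_N,Tx_N)\le\frac1{k+1}$. $g^M(n):=\max\{g(i)\mid i\le n\}$. *)

theory Defs
  imports "HOL-Analysis.Analysis"
begin

definition II_modulus :: "'a::metric_space set \<Rightarrow> (nat \<Rightarrow> nat) \<Rightarrow> bool" where
  "II_modulus C \<gamma> \<longleftrightarrow>
     (\<forall>k (y::nat \<Rightarrow> 'a). (\<forall>n. y n \<in> C) \<longrightarrow>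
        (\<exists>i j. i < j \<and> j \<le> \<gamma> k \<and> dist (y i) (y j) \<le> 1 / (real k + 1)))"

definition nonexpansive_on :: "'a::metric_space set \<Rightarrow> ('a \<Rightarrow> 'a) \<Rightarrow> bool" where
  "nonexpansive_on C T \<longleftrightarrow> (\<forall>x\<in>C. \<forall>y\<in>C. dist (T x) (T y) \<le> dist x y)"

definition afp_bound :: "('a::metric_space \<Rightarrow> 'a) \<Rightarrow> (nat \<Rightarrow> 'a) \<Rightarrow> (nat \<Rightarrow> nat) \<Rightarrow> bool" where
  "afp_bound T xs \<Phi> \<longleftrightarrow> mono \<Phi> \<and>
     (\<forall>k. \<exists>N\<le>\<Phi> k. dist (xs N) (T (xs N)) \<le> 1 / (real k + 1))"

definition maxfun :: "(nat \<Rightarrow> nat) \<Rightarrow> nat \<Rightarrow> nat" where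
  "maxfun g n = Max (g ` {..n})"

fun Sigma0 :: "(nat \<Rightarrow> nat) \<Rightarrow> (nat \<Rightarrow> nat) \<Rightarrow> nat \<Rightarrow> nat \<Rightarrow> nat" where
  "Sigma0 \<Phi> g k 0 = 0"
| "Sigma0 \<Phi> g k (Suc n) = \<Phi> ((4*k+4) * maxfun g (Sigma0 \<Phi> g k n))"

fun Sigma0' :: "(nat \<Rightarrow> nat) \<Rightarrow> (nat \<Rightarrow> nat) \<Rightarrow> nat \<Rightarrow> nat \<Rightarrow> nat" where
  "Sigma0' \<Phi> g k 0 = 0"
| "Sigma0' \<Phi> g k (Suc n) = \<Phi> (max (2*k+1) ((8*k+8) * maxfun g (Sigma0' \<Phi> g k n)))"

end

theory Submission
  imports Defs
begin

lemma maxfun_ge: "i \<le> n \<Longrightarrow> g i \<le> maxfun g n"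
  unfolding maxfun_def by (rule Max_ge) auto

lemma maxfun_mono: "a \<le> b \<Longrightarrow> maxfun g a \<le> maxfun g b"
  unfolding maxfun_def by (rule Max_mono) auto

lemma iter_dist:
  assumes XS: "\<forall>n. X (Suc n) = T (X n)" and XC: "\<forall>n. X n \<in> C"
    and ne: "nonexpansive_on C T"
  shows "dist (X (a+m)) (X (b+m)) \<le> dist (X a) (X b)"
proof (induction m)
  case 0 then show ?case by simp
next
  case (Suc m)
  have "dist (X (a + Suc m)) (X (b + Suc m)) = dist (T (X (a+m))) (T (X (b+m)))"
    using XS by simp
  also have "\<dots> \<le> dist (X (a+m)) (X (b+m))"
    using ne XC unfolding nonexpansive_on_def by blast
  finally show ?case using Suc by linarith
qed

lemma step_dist:
  assumes XS: "\<forall>n. X (Suc n) = T (X n)" and XC: "\<forall>n. X n \<in> C"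
    and ne: "nonexpansive_on C T"
  shows "dist (X n) (X (n+m)) \<le> real m * dist (X n) (X (Suc n))"
proof (induction m)
  case 0 then show ?case by simp
next
  case (Suc m)
  have "dist (X (n+m)) (X (n + Suc m)) \<le> dist (X n) (X (Suc n))"
    using iter_dist[OF XS XC ne, of n m "Suc n"] by (simp add: add.commute)
  then have "dist (X n) (X (n + Suc m)) \<le> dist (X n) (X (n+m)) + dist (X n) (X (Suc n))"
    using dist_triangle[of "X n" "X (n + Suc m)" "X (n+m)"] by linarith
  then show ?case using Suc by (simp add: algebra_simps)
qed

lemma inv_le: "(a::nat) \<le> b \<Longrightarrow> 1 / (real b + 1) \<le> 1 / (real a + 1)"
  by (simp add: frac_le)

lemma tri4: "dist (a::'a::metric_space) b \<le> dist a c + dist d c + dist d e + dist b e"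
proof -
  have "dist a b \<le> dist a c + dist c b" by (rule dist_triangle)
  moreover have "dist c b \<le> dist c d + dist d b" by (rule dist_triangle)
  moreover have "dist d b \<le> dist d e + dist e b" by (rule dist_triangle)
  ultimately show ?thesis by (simp add: dist_commute)
qed

lemma tri3: "dist (a::'a::metric_space) b \<le> dist a c + dist c d + dist b d"
proof -
  have "dist a b \<le> dist a c + dist c b" by (rule dist_triangle)
  moreover have "dist c b \<le> dist c d + dist d b" by (rule dist_triangle)
  ultimately show ?thesis by (simp add: dist_commute)
qed

lemma aux: "(a::real) > 0 \<Longrightarrow> 2 * (1 / (8 * a)) + 1 / (2 * a) = (3/4) * (1 / a)"
  by (simp add: field_simps)

lemma core:
  fixes X :: "nat \<Rightarrow> 'a::metric_space" and s Ns :: "nat \<Rightarrow> nat" and c :: nat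
  assumes XS: "\<forall>n. X (Suc n) = T (X n)" and XC: "\<forall>n. X n \<in> C"
    and ne: "nonexpansive_on C T" and II: "II_modulus C \<gamma>"
    and smono: "mono s" and Nb: "\<forall>n. Ns n \<le> s (Suc n)"
    and step: "\<forall>n. dist (X (Ns n)) (X (Suc (Ns n))) \<le> 1 / (real (c * maxfun g (s n)) + 1)"
    and cpos: "c > 0"
  shows "\<exists>i j. i < j \<and> Ns i \<le> s (\<gamma> q)
     \<and> (\<forall>m. dist (X (Ns i + m)) (X (Ns j + m)) \<le> 1 / (real q + 1))
     \<and> (\<forall>m \<le> g (Ns i). dist (X (Ns j)) (X (Ns j + m)) \<le> 1 / real c)"
proof -
  have yC: "\<forall>n. (\<lambda>n. X (Ns n)) n \<in> C" using XC by blast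
  have "\<exists>i j. i < j \<and> j \<le> \<gamma> q \<and> dist ((\<lambda>n. X (Ns n)) i) ((\<lambda>n. X (Ns n)) j) \<le> 1 / (real q + 1)"
  proof -
    have H: "\<forall>k y. (\<forall>n. y n \<in> C) \<longrightarrow> (\<exists>i j. i < j \<and> j \<le> \<gamma> k \<and> dist (y i) (y j) \<le> 1 / (real k + 1))"
      using II unfolding II_modulus_def .
    show ?thesis using spec[OF spec[OF H, of q], of "\<lambda>n. X (Ns n)"] yC by (rule mp)
  qed
  then obtain i j where ij: "i < j" "j \<le> \<gamma> q" "dist (X (Ns i)) (X (Ns j)) \<le> 1 / (real q + 1)"
    by blast
  have "Ns i \<le> s (Suc i)" using Nb by blast
  also have "s (Suc i) \<le> s j" using smono ij(1) by (simp add: monoD)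
  finally have Ni: "Ns i \<le> s j" .
  have "s j \<le> s (\<gamma> q)" using smono ij(2) by (simp add: monoD)
  with Ni have A: "Ns i \<le> s (\<gamma> q)" by linarith
  have B: "\<forall>m. dist (X (Ns i + m)) (X (Ns j + m)) \<le> 1 / (real q + 1)"
  proof
    fix m show "dist (X (Ns i + m)) (X (Ns j + m)) \<le> 1 / (real q + 1)"
      using iter_dist[OF XS XC ne, of "Ns i" m "Ns j"] ij(3) by linarith
  qed
  have C: "dist (X (Ns j)) (X (Ns j + m)) \<le> 1 / real c" if m: "m \<le> g (Ns i)" for m
  proof -
    define M where "M = maxfun g (s j)"
    have mM: "m \<le> M" using m maxfun_ge[OF Ni, of g] unfolding M_def by linarith
    have "dist (X (Ns j)) (X (Ns j + m)) \<le> real m * dist (X (Ns j)) (X (Suc (Ns j)))"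
      by (rule step_dist[OF XS XC ne])
    also have "\<dots> \<le> real M * (1 / (real (c * M) + 1))"
      using step mM by (intro mult_mono) (auto simp: M_def)
    also have "\<dots> \<le> 1 / real c"
    proof -
      have cp: "real c > 0" using cpos by simp
      have "real M * (1 / (real (c * M) + 1)) = real M / (real c * real M + 1)" by simp
      also have "\<dots> \<le> 1 / real c"
      proof -
        have "real c * real M + 1 > 0" by (intro add_nonneg_pos mult_nonneg_nonneg) simp_all
        then show ?thesis using cp by (simp add: divide_simps)
      qed
      finally show ?thesis .
    qed
    finally show ?thesis .
  qed
  show ?thesis using ij(1) A B C by blast
qed

lemma Sigma0_mono:
  assumes "mono \<Phi>" shows "mono (Sigma0 \<Phi> g k)"
proof -
  have "Sigma0 \<Phi> g k n \<le> Sigma0 \<Phi> g k (Suc n)" for n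
  proof (induction n)
    case 0 then show ?case by simp
  next
    case (Suc n)
    then show ?case using assms maxfun_mono[OF Suc, of g]
      by (simp add: monoD)
  qed
  then show ?thesis by (simp add: mono_iff_le_Suc)
qed

lemma Sigma0'_mono:
  assumes "mono \<Phi>" shows "mono (Sigma0' \<Phi> g k)"
proof -
  have "Sigma0' \<Phi> g k n \<le> Sigma0' \<Phi> g k (Suc n)" for n
  proof (induction n)
    case 0 then show ?case by simp
  next
    case (Suc n)
    have "max (2*k+1) ((8*k+8) * maxfun g (Sigma0' \<Phi> g k n))
       \<le> max (2*k+1) ((8*k+8) * maxfun g (Sigma0' \<Phi> g k (Suc n)))"
      by (rule max.mono) (rule order_refl, rule mult_le_mono2, rule maxfun_mono, rule Suc.IH)
    then have "\<Phi> (max (2*k+1) ((8*k+8) * maxfun g (Sigma0' \<Phi> g k n)))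
       \<le> \<Phi> (max (2*k+1) ((8*k+8) * maxfun g (Sigma0' \<Phi> g k (Suc n))))"
      by (rule monoD[OF assms])
    then show ?case by (metis Sigma0'.simps(2))
  qed
  then show ?thesis by (simp add: mono_iff_le_Suc)
qed


theorem theorem7p7:
  fixes C :: "'a::metric_space set" and T :: "'a \<Rightarrow> 'a" and x :: 'a
    and \<gamma> \<Phi> g :: "nat \<Rightarrow> nat" and k :: nat
  assumes "totally_bounded C"
    and "II_modulus C \<gamma>"
    and "T ` C \<subseteq> C"
    and "nonexpansive_on C T"
    and "\<exists>p\<in>C. T p = p"
    and "x \<in> C"
    and "afp_bound T (\<lambda>n. (T ^^ n) x) \<Phi>"
  shows "(\<exists>N\<le>Sigma0 \<Phi> g k (\<gamma> (4*k+3)).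
            \<forall>i j. N \<le> i \<and> i \<le> N + g N \<and> N \<le> j \<and> j \<le> N + g N \<longrightarrow>
              dist ((T ^^ i) x) ((T ^^ j) x) \<le> 1 / (real k + 1))
       \<and> (\<exists>N\<le>Sigma0' \<Phi> g k (\<gamma> (8*k+7)).
            \<forall>i j. N \<le> i \<and> i \<le> N + g N \<and> N \<le> j \<and> j \<le> N + g N \<longrightarrow>
              dist ((T ^^ i) x) ((T ^^ j) x) \<le> 1 / (real k + 1)
              \<and> dist ((T ^^ i) x) (T ((T ^^ i) x)) \<le> 1 / (real k + 1))"
proof -
  define X where "X = (\<lambda>n. (T ^^ n) x)"
  have XS: "\<forall>n. X (Suc n) = T (X n)" by (simp add: X_def)
  have XC: "\<forall>n. X n \<in> C"
  proof
    fix n show "X n \<in> C"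
      by (induction n) (use assms(3,6) in \<open>auto simp: X_def\<close>)
  qed
  have ne: "nonexpansive_on C T" by fact
  have Phimono: "mono \<Phi>" using assms(7) unfolding afp_bound_def by blast
  have "\<forall>kk. \<exists>N. N \<le> \<Phi> kk \<and> dist (X N) (T (X N)) \<le> 1 / (real kk + 1)"
    using assms(7) unfolding afp_bound_def X_def by blast
  then obtain Nf where Nf0: "\<And>kk. Nf kk \<le> \<Phi> kk \<and> dist (X (Nf kk)) (T (X (Nf kk))) \<le> 1 / (real kk + 1)"
    by metis
  have Nf: "\<And>kk. Nf kk \<le> \<Phi> kk" "\<And>kk. dist (X (Nf kk)) (X (Suc (Nf kk))) \<le> 1 / (real kk + 1)"
    using Nf0 XS by auto
  have P1: "\<exists>N\<le>Sigma0 \<Phi> g k (\<gamma> (4*k+3)).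
            \<forall>i j. N \<le> i \<and> i \<le> N + g N \<and> N \<le> j \<and> j \<le> N + g N \<longrightarrow>
              dist (X i) (X j) \<le> 1 / (real k + 1)"
  proof -
    define s where "s = Sigma0 \<Phi> g k"
    define Ns where "Ns = (\<lambda>n. Nf ((4*k+4) * maxfun g (s n)))"
    have Nb: "\<forall>n. Ns n \<le> s (Suc n)" using Nf(1) by (simp add: Ns_def s_def)
    have step: "\<forall>n. dist (X (Ns n)) (X (Suc (Ns n))) \<le> 1 / (real ((4*k+4) * maxfun g (s n)) + 1)"
      unfolding Ns_def by (intro allI) (rule Nf(2))
    obtain i j where ij: "Ns i \<le> s (\<gamma> (4*k+3))"
      "\<forall>m. dist (X (Ns i + m)) (X (Ns j + m)) \<le> 1 / (real (4*k+3) + 1)"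
      "\<forall>m \<le> g (Ns i). dist (X (Ns j)) (X (Ns j + m)) \<le> 1 / real (4*k+4)"
      using core[OF XS XC ne assms(2) Sigma0_mono[OF Phimono, of g k, folded s_def] Nb step, of "4*k+3"]
      by auto
    define N where "N = Ns i"
    have e: "1 / (real (4*k+3) + 1) = 1 / (4 * (real k + 1))" "1 / real (4*k+4) = 1 / (4 * (real k + 1))"
      by (simp_all add: algebra_simps)
    have ij2: "\<forall>m. dist (X (Ns i + m)) (X (Ns j + m)) \<le> 1 / (4 * (real k + 1))" using ij(2) unfolding e .
    have ij3: "\<forall>m \<le> g (Ns i). dist (X (Ns j)) (X (Ns j + m)) \<le> 1 / (4 * (real k + 1))" using ij(3) unfolding e .
    have "dist (X p) (X p') \<le> 1 / (real k + 1)"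
      if p: "N \<le> p" "p \<le> N + g N" "N \<le> p'" "p' \<le> N + g N" for p p'
    proof -
      define m where "m = p - N"
      define m' where "m' = p' - N"
      have pm: "p = N + m" "p' = N + m'" using p by (auto simp: m_def m'_def)
      have mm: "m \<le> g N" "m' \<le> g N" using p by (auto simp: m_def m'_def)
      have d1: "dist (X p) (X (Ns j + m)) \<le> 1 / (4 * (real k + 1))"
        using ij2 pm unfolding N_def by simp
      have d2: "dist (X p') (X (Ns j + m')) \<le> 1 / (4 * (real k + 1))"
        using ij2 pm unfolding N_def by simp
      have d3: "dist (X (Ns j)) (X (Ns j + m)) \<le> 1 / (4 * (real k + 1))"
        using ij3 mm unfolding N_def by blast
      have d4: "dist (X (Ns j)) (X (Ns j + m')) \<le> 1 / (4 * (real k + 1))"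
        using ij3 mm unfolding N_def by blast
      have "dist (X p) (X p') \<le> dist (X p) (X (Ns j + m)) + dist (X (Ns j)) (X (Ns j + m))
          + dist (X (Ns j)) (X (Ns j + m')) + dist (X p') (X (Ns j + m'))"
        by (rule tri4)
      also have "\<dots> \<le> 4 * (1 / (4 * (real k + 1)))" using d1 d2 d3 d4 by linarith
      also have "\<dots> = 1 / (real k + 1)" by (simp add: field_simps)
      finally show ?thesis .
    qed
    moreover have "N \<le> Sigma0 \<Phi> g k (\<gamma> (4*k+3))" using ij(1) by (simp add: N_def s_def)
    ultimately show ?thesis by blast
  qed
  have P2: "\<exists>N\<le>Sigma0' \<Phi> g k (\<gamma> (8*k+7)).
            \<forall>i j. N \<le> i \<and> i \<le> N + g N \<and> N \<le> j \<and> j \<le> N + g N \<longrightarrow>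
              dist (X i) (X j) \<le> 1 / (real k + 1) \<and> dist (X i) (T (X i)) \<le> 1 / (real k + 1)"
  proof -
    define s where "s = Sigma0' \<Phi> g k"
    define Ns where "Ns = (\<lambda>n. Nf (max (2*k+1) ((8*k+8) * maxfun g (s n))))"
    have Nb: "\<forall>n. Ns n \<le> s (Suc n)" using Nf(1) by (simp add: Ns_def s_def)
    have stepm: "dist (X (Ns n)) (X (Suc (Ns n))) \<le> 1 / (real (max (2*k+1) ((8*k+8) * maxfun g (s n))) + 1)" for n
      unfolding Ns_def by (rule Nf(2))
    have step: "\<forall>n. dist (X (Ns n)) (X (Suc (Ns n))) \<le> 1 / (real ((8*k+8) * maxfun g (s n)) + 1)"
    proof
      fix n
      have "1 / (real (max (2*k+1) ((8*k+8) * maxfun g (s n))) + 1) \<le> 1 / (real ((8*k+8) * maxfun g (s n)) + 1)"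
        by (rule inv_le) simp
      then show "dist (X (Ns n)) (X (Suc (Ns n))) \<le> 1 / (real ((8*k+8) * maxfun g (s n)) + 1)"
        using stepm[of n] by linarith
    qed
    have step2: "dist (X (Ns n)) (X (Suc (Ns n))) \<le> 1 / (2 * (real k + 1))" for n
    proof -
      have "1 / (real (max (2*k+1) ((8*k+8) * maxfun g (s n))) + 1) \<le> 1 / (real (2*k+1) + 1)"
        by (rule inv_le) simp
      also have "\<dots> = 1 / (2 * (real k + 1))" by (simp add: algebra_simps)
      finally show ?thesis using stepm[of n] by linarith
    qed
    obtain i j where ij: "Ns i \<le> s (\<gamma> (8*k+7))"
      "\<forall>m. dist (X (Ns i + m)) (X (Ns j + m)) \<le> 1 / (real (8*k+7) + 1)"
      "\<forall>m \<le> g (Ns i). dist (X (Ns j)) (X (Ns j + m)) \<le> 1 / real (8*k+8)"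
      using core[OF XS XC ne assms(2) Sigma0'_mono[OF Phimono, of g k, folded s_def] Nb step, of "8*k+7"]
      by auto
    define N where "N = Ns i"
    have e: "1 / (real (8*k+7) + 1) = 1 / (8 * (real k + 1))" "1 / real (8*k+8) = 1 / (8 * (real k + 1))"
      by (simp_all add: algebra_simps)
    have ij2: "\<forall>m. dist (X (Ns i + m)) (X (Ns j + m)) \<le> 1 / (8 * (real k + 1))" using ij(2) unfolding e .
    have ij3: "\<forall>m \<le> g (Ns i). dist (X (Ns j)) (X (Ns j + m)) \<le> 1 / (8 * (real k + 1))" using ij(3) unfolding e .
    have "dist (X p) (X p') \<le> 1 / (real k + 1) \<and> dist (X p) (T (X p)) \<le> 1 / (real k + 1)"
      if p: "N \<le> p" "p \<le> N + g N" "N \<le> p'" "p' \<le> N + g N" for p p'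
    proof -
      define m where "m = p - N"
      define m' where "m' = p' - N"
      have pm: "p = N + m" "p' = N + m'" using p by (auto simp: m_def m'_def)
      have mm: "m \<le> g N" "m' \<le> g N" using p by (auto simp: m_def m'_def)
      have d1: "dist (X p) (X (Ns j + m)) \<le> 1 / (8 * (real k + 1))"
        using ij2 pm unfolding N_def by simp
      have d2: "dist (X p') (X (Ns j + m')) \<le> 1 / (8 * (real k + 1))"
        using ij2 pm unfolding N_def by simp
      have d3: "dist (X (Ns j)) (X (Ns j + m)) \<le> 1 / (8 * (real k + 1))"
        using ij3 mm unfolding N_def by blast
      have d4: "dist (X (Ns j)) (X (Ns j + m')) \<le> 1 / (8 * (real k + 1))"
        using ij3 mm unfolding N_def by blast
      have d5: "dist (X (Suc p)) (X (Suc (Ns j + m))) \<le> 1 / (8 * (real k + 1))"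
        using ij2[rule_format, of "Suc m"] pm unfolding N_def by simp
      have d6: "dist (X (Ns j + m)) (X (Suc (Ns j + m))) \<le> 1 / (2 * (real k + 1))"
        using iter_dist[OF XS XC ne, of "Ns j" m "Suc (Ns j)"] step2[of j] by (simp add: add.commute)
      have "dist (X p) (X p') \<le> dist (X p) (X (Ns j + m)) + dist (X (Ns j)) (X (Ns j + m))
          + dist (X (Ns j)) (X (Ns j + m')) + dist (X p') (X (Ns j + m'))"
        by (rule tri4)
      also have "\<dots> \<le> 4 * (1 / (8 * (real k + 1)))" using d1 d2 d3 d4 by linarith
      also have "\<dots> \<le> 1 / (real k + 1)" by (simp add: field_simps)
      finally have A: "dist (X p) (X p') \<le> 1 / (real k + 1)" .
      have "dist (X p) (X (Suc p)) \<le> dist (X p) (X (Ns j + m)) + dist (X (Ns j + m)) (X (Suc (Ns j + m)))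
          + dist (X (Suc p)) (X (Suc (Ns j + m)))"
        by (rule tri3)
      also have "\<dots> \<le> 2 * (1 / (8 * (real k + 1))) + 1 / (2 * (real k + 1))" using d1 d5 d6 by linarith
      also have "\<dots> = (3/4) * (1 / (real k + 1))"
        using aux[of "real k + 1"] by simp
      also have "\<dots> \<le> 1 / (real k + 1)"
        by (rule mult_left_le_one_le) auto
      finally have "dist (X p) (T (X p)) \<le> 1 / (real k + 1)" using XS by simp
      with A show ?thesis by blast
    qed
    moreover have "N \<le> Sigma0' \<Phi> g k (\<gamma> (8*k+7))" using ij(1) by (simp add: N_def s_def)
    ultimately show ?thesis by blast
  qed
  show ?thesis using P1 P2 unfolding X_def by blast
qed
end
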